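(* Let $q$ be a prime power, $n\ge1$, and let $f(x)\neq x-1$ be a primitive polynomial of degree $n$ over $\mathbb{F}_q$. Then the polynomial $$F(x)=\frac{f\big(x^{q^n}+x^{q^n-1}\big)}{f(x+1)}$$ of degree $n(q^n-1)$ is irreducible over $\mathbb{F}_q$.
   Context: A primitive polynomial of degree $n$ over $\mathbb{F}_q$ is a monic irreducible polynomial of degree $n$ whose roots generate the multiplicative group $\mathbb{F}_{q^n}^*$. *)

theory Defs
  imports "HOL-Computational_Algebra.Computational_Algebra"
begin

text \<open>A primitive polynomial of degree n over the finite field 'a (with q = card (UNIV :: 'a set)):
  a monic irreducible polynomial of degree n such that its root, i.e. the class of X in
  the field 'a[X]/(f) (a copy of F_{q^n}), has multiplicative order q^n - 1, i.e. generates
  the multiplicative group. The order of [X] in 'a[X]/(f) is the least k > 0 with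
  f dvd X^k - 1.\<close>
definition primitive_poly :: "nat \<Rightarrow> 'a::{finite,field} poly \<Rightarrow> bool" where
  "primitive_poly n f \<longleftrightarrow>
     lead_coeff f = 1 \<and> degree f = n \<and> irreducible f \<and>
     f dvd [:0, 1:] ^ (card (UNIV :: 'a set) ^ n - 1) - 1 \<and>
     (\<forall>k. 0 < k \<and> k < card (UNIV :: 'a set) ^ n - 1 \<longrightarrow> \<not> f dvd [:0, 1:] ^ k - 1)"

end

theory Submission
  imports Defs "HOL-Number_Theory.Cong" "HOL-Algebra.Sylow"
begin

lemma char_prime_ff: "prime (CHAR('a::{finite,field}))"
proof -
  have "CHAR('a) > 0" by (rule finite_imp_CHAR_pos) simp
  then show ?thesis using prime_CHAR_semidom by blast
qed

definition addG :: "'a::field monoid" where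
  "addG = \<lparr>carrier = UNIV, monoid.mult = (+), one = 0\<rparr>"

lemma addG_group: "group (addG :: 'a::field monoid)"
  unfolding addG_def
  apply (rule groupI)
  apply (auto simp: add.assoc)
  by (metis add.left_inverse)

lemma addG_pow_gen: "x [^]\<^bsub>\<lparr>carrier = C, monoid.mult = (+), one = (0::'a::field)\<rparr>\<^esub> (k::nat) = of_nat k * x"
  by (induction k) (auto simp: algebra_simps)

lemma addG_pow: "x [^]\<^bsub>(addG :: 'a::field monoid)\<^esub> (k::nat) = of_nat k * x"
  by (simp add: addG_def addG_pow_gen)

lemma card_prime_factor_char:
  assumes "prime l" "l dvd card (UNIV :: 'a::{finite,field} set)"
  shows "l = CHAR('a)"
proof (rule ccontr)
  assume ne: "l \<noteq> CHAR('a)"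
  interpret G: group "addG :: 'a monoid" by (rule addG_group)
  have ord: "order (addG :: 'a monoid) = l ^ 1 * (card (UNIV :: 'a set) div l)"
    using assms by (simp add: order_def addG_def)
  obtain H where H: "subgroup H (addG :: 'a monoid)" "card H = l"
    using sylow_thm[OF assms(1) addG_group ord] by (auto simp: addG_def)
  have fH: "finite H" by simp
  have Hc: "x + y \<in> H" if "x \<in> H" "y \<in> H" for x y
    using subgroup.m_closed[OF H(1) that] by (simp add: addG_def)
  have "x = 0" if xH: "x \<in> H" for x
  proof -
    have im: "(\<lambda>y. x + y) ` H = H"
      by (rule endo_inj_surj[OF fH]) (auto intro: Hc xH inj_onI)
    have "sum (\<lambda>y. y) H = sum (\<lambda>y. y) ((\<lambda>y. x + y) ` H)" by (simp only: im)
    also have "\<dots> = sum (\<lambda>y. x + y) H" by (subst sum.reindex) (auto intro: inj_onI)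
    also have "\<dots> = of_nat (card H) * x + sum (\<lambda>y. y) H" by (simp add: sum.distrib)
    finally have "of_nat l * x = 0" using H(2) by simp
    moreover have "of_nat l \<noteq> (0::'a)"
    proof
      assume "of_nat l = (0::'a)"
      hence "CHAR('a) dvd l" by (simp add: of_nat_eq_0_iff_char_dvd)
      with assms(1) char_prime_ff[where 'a='a] ne show False
        by (metis prime_nat_iff prime_gt_1_nat nat_neq_iff One_nat_def)
    qed
    ultimately show "x = 0" by simp
  qed
  hence "H \<subseteq> {0}" by auto
  hence "card H \<le> card {0::'a}" by (intro card_mono) auto
  with H(2) prime_gt_1_nat[OF assms(1)] show False by simp
qed

lemma prime_power_from_factors:
  fixes p :: nat
  assumes "prime p" "n > 0" "\<And>l. prime l \<Longrightarrow> l dvd n \<Longrightarrow> l = p"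
  shows "\<exists>r. n = p ^ r"
  using assms(2,3)
proof (induction n rule: less_induct)
  case (less n)
  show ?case
  proof (cases "n = 1")
    case True then show ?thesis by (intro exI[of _ 0]) simp
  next
    case False
    then obtain l where l: "prime l" "l dvd n" using prime_factor_nat[of n] by auto
    have lp: "l = p" using less.prems(2)[OF l] .
    obtain k where k: "n = p * k" using l(2) unfolding lp dvd_def by blast
    have "k > 0" using k less.prems(1) by (cases k) auto
    have "k < n" using k \<open>k > 0\<close> prime_gt_1_nat[OF assms(1)] by simp
    have kf: "l' = p" if "prime l'" "l' dvd k" for l'
    proof -
      have "l' dvd n" using that(2) k by (simp add: dvd_mult)
      then show ?thesis using less.prems(2) that(1) by blast
    qed
    have "\<exists>r. k = p ^ r"
      by (rule less.IH[OF \<open>k < n\<close> \<open>k > 0\<close> kf])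
    then obtain r where "k = p ^ r" by blast
    with k show ?thesis by (intro exI[of _ "Suc r"]) simp
  qed
qed

lemma card_char_power: "\<exists>r. card (UNIV :: 'a::{finite,field} set) = CHAR('a) ^ r"
proof (rule prime_power_from_factors[OF char_prime_ff])
  show "card (UNIV :: 'a set) > 0" by (rule finite_UNIV_card_ge_0) simp
  show "l = CHAR('a)" if "prime l" "l dvd card (UNIV :: 'a set)" for l
    using card_prime_factor_char[OF that] .
qed

lemma ff_power_card: "(x::'a::{finite,field}) ^ card (UNIV :: 'a set) = x"
proof (cases "x = 0")
  case False
  define P where "P = (\<Prod>y\<in>UNIV-{0::'a}. y)"
  have P0: "P \<noteq> 0" unfolding P_def by (subst prod_zero_iff) auto
  have c: "card (UNIV - {0::'a}) = card (UNIV :: 'a set) - 1"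
    by (simp add: card_Diff_singleton)
  have "(\<Prod>y\<in>UNIV-{0}. x * y) = x ^ card (UNIV - {0::'a}) * P"
    unfolding P_def by (simp add: prod.distrib)
  moreover have "(\<Prod>y\<in>UNIV-{0}. x * y) = P"
    unfolding P_def
    by (rule prod.reindex_bij_witness[of _ "\<lambda>y. y / x" "\<lambda>y. x * y"]) (use False in auto)
  ultimately have "x ^ (card (UNIV :: 'a set) - 1) * P = 1 * P" using c by simp
  hence e: "x ^ (card (UNIV :: 'a set) - 1) = 1" using P0 by (rule mult_right_cancel[THEN iffD1, rotated])
  have "card (UNIV :: 'a set) = Suc (card (UNIV :: 'a set) - 1)"
    using finite_UNIV_card_ge_0[where ?'a = 'a] by simp
  hence "x ^ card (UNIV :: 'a set) = x * x ^ (card (UNIV :: 'a set) - 1)"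
    by (metis power_Suc)
  with e show ?thesis by simp
next
  case True
  have "card (UNIV :: 'a set) > 0" using finite_UNIV_card_ge_0[where ?'a = 'a] by simp
  with True show ?thesis by (simp add: power_0_left)
qed

lemma ff_power_card_pow: "(x::'a::{finite,field}) ^ (card (UNIV :: 'a set) ^ j) = x"
  by (induction j) (simp_all add: ff_power_card power_mult)

lemma poly_frob_add:
  fixes A B :: "'a::{finite,field} poly"
  shows "(A + B) ^ (card (UNIV :: 'a set) ^ j) = A ^ (card (UNIV :: 'a set) ^ j) + B ^ (card (UNIV :: 'a set) ^ j)"
proof -
  obtain r where r: "card (UNIV :: 'a set) = CHAR('a) ^ r" using card_char_power by blast
  have pc: "prime CHAR('a poly)" using char_prime_ff[where 'a='a] by simp
  show ?thesis
    by (rule freshmans_dream'[OF pc, where n="r*j"]) (simp add: r power_mult)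
qed

lemma poly_frob_diff:
  fixes A B :: "'a::{finite,field} poly"
  shows "(A - B) ^ (card (UNIV :: 'a set) ^ j) = A ^ (card (UNIV :: 'a set) ^ j) - B ^ (card (UNIV :: 'a set) ^ j)"
  using poly_frob_add[of "A - B" B j] by (simp add: algebra_simps)

lemma const_pow: "[:c::'a::comm_semiring_1:] ^ k = [:c ^ k:]"
  by (induction k) (auto simp: mult.commute)

lemma pCons_as_X: "pCons a (A::'a::comm_ring_1 poly) = [:a:] + [:0,1:] * A"
  by simp

lemma poly_frob_const:
  "[:c::'a::{finite,field}:] ^ (card (UNIV :: 'a set) ^ j) = [:c:]"
  by (simp add: const_pow ff_power_card_pow)

lemma poly_frob_comp:
  fixes A :: "'a::{finite,field} poly"
  shows "A ^ (card (UNIV :: 'a set) ^ j) = pcompose A ([:0,1:] ^ (card (UNIV :: 'a set) ^ j))"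
proof (induction A)
  case 0
  have "card (UNIV :: 'a set) ^ j > 0" using finite_UNIV_card_ge_0[where ?'a = 'a] by simp
  then show ?case by (simp add: power_0_left)
next
  case (pCons a A)
  let ?k = "card (UNIV :: 'a set) ^ j"
  have "(pCons a A) ^ ?k = ([:a:] + [:0,1:] * A) ^ ?k" by (metis pCons_as_X)
  also have "\<dots> = [:a:] + [:0,1:] ^ ?k * A ^ ?k"
    by (simp only: poly_frob_add poly_frob_const power_mult_distrib)
  also have "\<dots> = pcompose (pCons a A) ([:0,1:] ^ ?k)"
    by (simp only: pcompose_pCons pCons.IH)
  finally show ?case .
qed

abbreviation pX :: "'a::comm_ring_1 poly" where "pX \<equiv> [:0,1:]"

lemma dvd_pcompose_diff:
  fixes p A B :: "'a::comm_ring_1 poly"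
  shows "(A - B) dvd (pcompose p A - pcompose p B)"
proof (induction p)
  case 0 then show ?case by simp
next
  case (pCons a p)
  have "pcompose (pCons a p) A - pcompose (pCons a p) B
      = A * (pcompose p A - pcompose p B) + (A - B) * pcompose p B"
    by (simp add: pcompose_pCons algebra_simps)
  also have "(A - B) dvd \<dots>" using pCons.IH by simp
  finally show ?case .
qed

lemma pcompose_dvd:
  fixes p g A :: "'a::comm_ring_1 poly"
  assumes "p dvd g" shows "pcompose p A dvd pcompose g A"
proof -
  from assms obtain k where "g = p * k" by (auto elim: dvdE)
  then show ?thesis by (simp add: pcompose_mult)
qed

lemma prime_elem_not_dvd_prod:
  fixes p :: "'a::comm_semiring_1"
  assumes "prime_elem p" "finite A" "\<And>x. x \<in> A \<Longrightarrow> \<not> p dvd f x"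
  shows "\<not> p dvd prod f A"
  using assms(2,3)
proof (induction A rule: finite_induct)
  case empty then show ?case using assms(1) by (simp add: prime_elem_not_unit)
next
  case (insert x F)
  then show ?case using assms(1) by (simp add: prime_elem_dvd_mult_iff)
qed

lemma irred_bezout:
  fixes f g :: "'a::field poly"
  assumes irr: "irreducible f" and nd: "\<not> f dvd g"
  shows "\<exists>a b. a * f + b * g = 1"
proof -
  define S where "S = {c. (\<exists>a b. c = a * f + b * g) \<and> c \<noteq> 0}"
  have g0: "g \<noteq> 0" using nd by auto
  have "g = 0 * f + 1 * g" by simp
  hence "g \<in> S" using g0 unfolding S_def by blast
  define n where "n = (LEAST n. \<exists>c\<in>S. degree c = n)"
  have "\<exists>c\<in>S. degree c = n" unfolding n_def by (rule LeastI_ex) (use \<open>g \<in> S\<close> in blast)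
  then obtain c where cS: "c \<in> S" and cn: "degree c = n" by blast
  have minc: "degree c \<le> degree c'" if "c' \<in> S" for c'
    unfolding cn n_def by (rule Least_le) (use that in blast)
  from cS obtain a b where ab: "c = a * f + b * g" and c0: "c \<noteq> 0" unfolding S_def by blast
  have divs: "c dvd x" if "\<exists>a' b'. x = a' * f + b' * g" for x
  proof (rule ccontr)
    assume "\<not> c dvd x"
    hence m0: "x mod c \<noteq> 0" by (simp add: mod_eq_0_iff_dvd)
    from that obtain a' b' where x: "x = a' * f + b' * g" by blast
    have "x mod c = x - (x div c) * c" by (simp add: minus_div_mult_eq_mod)
    also have "\<dots> = (a' - x div c * a) * f + (b' - x div c * b) * g"
      by (simp add: x ab algebra_simps)
    finally have "x mod c \<in> S" using m0 unfolding S_def by blast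
    hence "degree c \<le> degree (x mod c)" by (rule minc)
    moreover have "degree (x mod c) < degree c" by (rule degree_mod_less'[OF c0 m0])
    ultimately show False by simp
  qed
  have cf: "c dvd f" by (rule divs) (rule exI[of _ 1], rule exI[of _ 0], simp)
  have cg: "c dvd g" by (rule divs) (rule exI[of _ 0], rule exI[of _ 1], simp)
  from cf obtain k where k: "f = c * k" by (auto elim: dvdE)
  from irreducibleD[OF irr k] have "is_unit c \<or> is_unit k" .
  moreover have "\<not> is_unit k"
  proof
    assume "is_unit k"
    hence "f dvd c" using k by (metis dvd_mult_unit_iff dvd_refl mult.commute)
    hence "f dvd g" using cg by (rule dvd_trans)
    with nd show False by simp
  qed
  ultimately have "is_unit c" by blast
  then obtain c' where "1 = c * c'" by (auto elim: dvdE)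
  hence "(c' * a) * f + (c' * b) * g = 1" by (simp add: ab algebra_simps)
  then show ?thesis by blast
qed

lemma comp_coprime:
  fixes f g h beta :: "'a::field poly"
  assumes irr: "irreducible f" and nd: "\<not> f dvd g"
    and h1: "h dvd pcompose f beta" and h2: "h dvd pcompose g beta"
  shows "is_unit h"
proof -
  obtain a b where ab: "a * f + b * g = 1" using irred_bezout[OF irr nd] by blast
  have "pcompose (a * f + b * g) beta = 1" by (simp add: ab pcompose_1)
  hence "pcompose a beta * pcompose f beta + pcompose b beta * pcompose g beta = 1"
    by (simp add: pcompose_add pcompose_mult)
  moreover have "h dvd pcompose a beta * pcompose f beta + pcompose b beta * pcompose g beta"
    using h1 h2 by simp
  ultimately show ?thesis by simp
qed

lemma card_deg_lt:
  assumes "d \<ge> 1"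
  shows "finite {r :: 'a::{finite,field} poly. degree r < d} \<and>
         card {r :: 'a poly. degree r < d} = card (UNIV :: 'a set) ^ d"
proof -
  let ?L = "{xs :: 'a list. set xs \<subseteq> UNIV \<and> length xs = d}"
  have bij: "bij_betw Poly ?L {r :: 'a poly. degree r < d}"
  proof (rule bij_betw_imageI)
    show "inj_on Poly ?L"
    proof (rule inj_onI)
      fix xs ys :: "'a list" assume xs: "xs \<in> ?L" and ys: "ys \<in> ?L" and e: "Poly xs = Poly ys"
      show "xs = ys"
      proof (rule nth_equalityI)
        show "length xs = length ys" using xs ys by simp
        fix i assume "i < length xs"
        moreover have "coeff (Poly xs) i = coeff (Poly ys) i" using e by simp
        ultimately show "xs ! i = ys ! i" using xs ys by (simp add: nth_default_def)
      qed
    qed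
    show "Poly ` ?L = {r. degree r < d}"
    proof (intro equalityI subsetI)
      fix r assume "r \<in> Poly ` ?L"
      then obtain xs where xs: "xs \<in> ?L" "r = Poly xs" by blast
      show "r \<in> {r. degree r < d}"
      proof (cases "r = 0")
        case True then show ?thesis using assms by simp
      next
        case False
        have "length (coeffs r) \<le> d"
          using xs by (simp add: coeffs_Poly) (metis length_strip_while_le)
        then show ?thesis using False by (simp add: length_coeffs_degree)
      qed
    next
      fix r :: "'a poly" assume r: "r \<in> {r. degree r < d}"
      have len: "length (coeffs r) \<le> d"
        using r by (cases "r = 0") (auto simp: length_coeffs_degree)
      let ?xs = "coeffs r @ replicate (d - length (coeffs r)) 0"
      have "?xs \<in> ?L" using len by simp
      moreover have "Poly ?xs = r" by simp
      ultimately show "r \<in> Poly ` ?L" by (metis image_eqI)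
    qed
  qed
  have fL: "finite ?L" by (rule finite_lists_length_eq) simp
  have "card ?L = card (UNIV :: 'a set) ^ d" by (rule card_lists_length_eq) simp
  moreover have "finite {r :: 'a poly. degree r < d}" using bij_betw_finite[OF bij] fL by blast
  moreover have "card ?L = card {r :: 'a poly. degree r < d}" by (rule bij_betw_same_card[OF bij])
  ultimately show ?thesis by simp
qed

lemma irred_degree_pos:
  fixes h :: "'a::field poly"
  assumes "irreducible h" shows "degree h \<ge> 1"
proof -
  have "h \<noteq> 0" "\<not> is_unit h" using assms by (auto simp: irreducible_def)
  then show ?thesis using is_unit_iff_degree[of h] by simp
qed

lemma prime_dvd_small:
  fixes h r :: "'a::field poly"
  assumes "h dvd r" "degree r < degree h"
  shows "r = 0"
proof (rule ccontr)
  assume "r \<noteq> 0"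
  with assms(1) have "degree h \<le> degree r" by (rule dvd_imp_degree_le)
  with assms(2) show False by simp
qed

lemma irr_X_frob:
  fixes h :: "'a::{finite,field} poly"
  assumes irr: "irreducible h"
  shows "h dvd pX ^ (card (UNIV :: 'a set) ^ degree h) - pX"
proof -
  define d where "d = degree h"
  define q where "q = card (UNIV :: 'a set)"
  have d1: "d \<ge> 1" unfolding d_def by (rule irred_degree_pos[OF irr])
  have q1: "q \<ge> 2"
  proof -
    have "card {0::'a, 1} \<le> card (UNIV :: 'a set)" by (rule card_mono) auto
    then show ?thesis by (simp add: q_def)
  qed
  have qd: "q ^ d \<ge> 1" using q1 by simp
  have pe: "prime_elem h" by (rule field_poly_irreducible_imp_prime[OF irr])
  show ?thesis
  proof (cases "h dvd pX")
    case True
    have "pX dvd (pX :: 'a poly) ^ (q ^ d) - pX"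
    proof (rule dvd_diff)
      show "pX dvd (pX :: 'a poly) ^ (q ^ d)" using q1 by (intro dvd_power) simp
    qed simp
    then show ?thesis using True unfolding q_def d_def by (rule dvd_trans[rotated])
  next
    case hX: False
    define R where "R = {r :: 'a poly. degree r < d} - {0}"
    obtain fin: "finite {r :: 'a poly. degree r < d}"
      and cardd: "card {r :: 'a poly. degree r < d} = q ^ d"
      using card_deg_lt[OF d1] unfolding q_def by blast
    have fR: "finite R" unfolding R_def using fin by simp
    have cR: "card R = q ^ d - 1" unfolding R_def
    proof -
      have "(0::'a poly) \<in> {r. degree r < d}" using d1 by simp
      then show "card ({r :: 'a poly. degree r < d} - {0}) = q ^ d - 1"
        using cardd fin by (simp add: card_Diff_singleton)
    qed
    define phi where "phi = (\<lambda>r. (pX * r) mod h)"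
    have h0: "h \<noteq> 0" using irr by (auto simp: irreducible_def)
    have ndr: "\<not> h dvd r" if "r \<in> R" for r
      using that prime_dvd_small[of h r] unfolding R_def d_def by auto
    have into: "phi ` R \<subseteq> R"
    proof
      fix y assume "y \<in> phi ` R"
      then obtain r where r: "r \<in> R" "y = phi r" by blast
      have "\<not> h dvd pX * r" using pe hX ndr[OF r(1)] prime_elem_dvd_mult_iff by blast
      hence y0: "y \<noteq> 0" unfolding r phi_def by (simp add: mod_eq_0_iff_dvd)
      hence "degree y < d" unfolding d_def using r(2) phi_def degree_mod_less'[OF h0] by simp
      with y0 show "y \<in> R" unfolding R_def by simp
    qed
    have inj: "inj_on phi R"
    proof (rule inj_onI)
      fix r s assume r: "r \<in> R" and s: "s \<in> R" and e: "phi r = phi s"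
      hence "h dvd pX * r - pX * s" unfolding phi_def by (simp add: mod_eq_dvd_iff)
      hence "h dvd pX * (r - s)" by (simp only: right_diff_distrib)
      hence hd: "h dvd r - s" using pe hX prime_elem_dvd_mult_iff by blast
      have "degree (r - s) < d" using r s unfolding R_def
        by (auto intro: le_less_trans[OF degree_diff_le_max])
      then have "r - s = 0" using prime_dvd_small[OF hd] unfolding d_def by simp
      then show "r = s" by simp
    qed
    have im: "phi ` R = R" by (rule endo_inj_surj[OF fR into inj])
    have "prod (\<lambda>r. r) R = prod (\<lambda>r. r) (phi ` R)" by (simp only: im)
    also have "\<dots> = prod phi R" by (simp add: prod.reindex[OF inj])
    finally have e1: "prod (\<lambda>r. r) R = prod phi R" .
    have "[prod phi R = prod (\<lambda>r. pX * r) R] (mod h)"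
      by (rule cong_prod) (simp add: phi_def)
    also have "prod (\<lambda>r. pX * r) R = pX ^ card R * prod (\<lambda>r. r) R"
      by (simp only: prod.distrib prod_constant)
    finally have "[1 * prod (\<lambda>r. r) R = pX ^ card R * prod (\<lambda>r. r) R] (mod h)"
      using e1 by simp
    hence "h dvd 1 * prod (\<lambda>r. r) R - pX ^ card R * prod (\<lambda>r. r) R"
      by (simp only: cong_iff_dvd_diff)
    also have "1 * prod (\<lambda>r. r) R - pX ^ card R * prod (\<lambda>r. r) R = - ((pX ^ card R - 1) * prod (\<lambda>r. r) R)"
      by (simp only: left_diff_distrib minus_diff_eq)
    finally have "h dvd (pX ^ card R - 1) * prod (\<lambda>r. r) R" by (simp only: dvd_minus_iff)
    moreover have "\<not> h dvd prod (\<lambda>r. r) R"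
      by (rule prime_elem_not_dvd_prod[OF pe fR]) (use ndr in auto)
    ultimately have "h dvd pX ^ card R - 1" using pe prime_elem_dvd_mult_iff by blast
    hence "h dvd pX * (pX ^ card R - 1)" by (rule dvd_mult)
    moreover have "pX * (pX ^ card R - 1) = pX ^ (q ^ d) - (pX :: 'a poly)"
    proof -
      have "q ^ d = Suc (card R)" using cR qd by simp
      then show ?thesis by (simp add: algebra_simps)
    qed
    ultimately have "h dvd pX ^ (q ^ d) - pX" by (simp only:)
    then show ?thesis unfolding q_def d_def .
  qed
qed

lemma irr_frob_all:
  fixes h A :: "'a::{finite,field} poly"
  assumes irr: "irreducible h"
  shows "[A ^ (card (UNIV :: 'a set) ^ degree h) = A] (mod h)"
proof -
  have "A ^ (card (UNIV :: 'a set) ^ degree h) - A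
      = pcompose A (pX ^ (card (UNIV :: 'a set) ^ degree h)) - pcompose A pX"
    by (simp only: poly_frob_comp[of A] pcompose_idR)
  moreover have "(pX ^ (card (UNIV :: 'a set) ^ degree h) - pX) dvd \<dots>"
    by (rule dvd_pcompose_diff)
  ultimately show ?thesis using irr_X_frob[OF irr]
    unfolding cong_iff_dvd_diff by (metis dvd_trans)
qed

lemma pcompose_pX_power: "pcompose (pX ^ k) r = (r :: 'a::comm_ring_1 poly) ^ k"
  by (induction k) (simp_all add: pcompose_mult pcompose_1 pcompose_pCons)

lemma pcompose_pX: "pcompose pX r = (r :: 'a::comm_ring_1 poly)"
  by (simp add: pcompose_pCons)

lemma cong_cancel_prime:
  fixes h a b c :: "'a::field poly"
  assumes pe: "prime_elem h" and nc: "\<not> h dvd c" and e: "[c * a = c * b] (mod h)"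
  shows "[a = b] (mod h)"
proof -
  have "h dvd c * a - c * b" using e by (simp add: cong_iff_dvd_diff)
  hence "h dvd c * (a - b)" by (simp add: right_diff_distrib)
  hence "h dvd a - b" using pe nc prime_elem_dvd_mult_iff by blast
  then show ?thesis by (simp add: cong_iff_dvd_diff)
qed

lemma irr_factor_exists:
  fixes a :: "'a::field poly"
  assumes "degree a \<ge> 1"
  shows "\<exists>h. irreducible h \<and> h dvd a"
  using assms
proof (induction "degree a" arbitrary: a rule: less_induct)
  case less
  show ?case
  proof (cases "irreducible a")
    case True then show ?thesis by (intro exI[of _ a]) simp
  next
    case False
    have a0: "a \<noteq> 0" using less.prems by auto
    have nu: "\<not> is_unit a" using less.prems is_unit_iff_degree[OF a0] by auto
    from False a0 nu obtain b c where bc: "a = b * c" "\<not> is_unit b" "\<not> is_unit c"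
      unfolding irreducible_def by blast
    have b0: "b \<noteq> 0" and c0: "c \<noteq> 0" using a0 bc by auto
    have db: "degree b \<ge> 1" using bc(2) is_unit_iff_degree[OF b0] by auto
    have dc: "degree c \<ge> 1" using bc(3) is_unit_iff_degree[OF c0] by auto
    have "degree a = degree b + degree c" using bc(1) b0 c0 by (simp add: degree_mult_eq)
    hence "degree b < degree a" using dc by simp
    from less.hyps[OF this db] obtain h where "irreducible h" "h dvd b" by blast
    then show ?thesis using bc(1) by (metis dvd_mult2)
  qed
qed

lemma dvd_X_root0:
  fixes h :: "'a::field poly"
  assumes "h dvd pX" "degree h \<ge> 1"
  shows "poly h 0 = 0"
proof -
  obtain k where k: "pX = h * k" using assms(1) by (auto elim: dvdE)
  have h0: "h \<noteq> 0" "k \<noteq> 0" using k by auto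
  have "degree (pX :: 'a poly) = degree h + degree k" using k h0 by (simp add: degree_mult_eq)
  hence "degree k = 0" using assms(2) by simp
  then obtain c where c: "k = [:c:]" by (auto elim: degree_eq_zeroE)
  have c0: "c \<noteq> 0" using c h0 by auto
  have "poly (pX :: 'a poly) 0 = poly (h * k) 0" using k by simp
  hence "poly h 0 * c = 0" using c by auto
  then show ?thesis using c0 by simp
qed

lemma S_lemma:
  fixes h x u w :: "'a::{finite,field} poly"
  assumes pe: "prime_elem h" and hx: "\<not> h dvd x" and hx1: "\<not> h dvd x + 1"
    and Qdef: "Q = card (UNIV :: 'a set) ^ n" and Qm: "Q = Suc m"
    and uq: "[u ^ Q = u] (mod h)"
    and udef: "u = x ^ Q + x ^ m"
    and wdef: "w = u - x - 1"
  shows "[w ^ (Q ^ k) * x * u ^ k = w * x ^ (Q ^ k)] (mod h)"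
proof -
  have fd: "(A - B) ^ Q = A ^ Q - B ^ Q" for A B :: "'a poly"
    using poly_frob_diff[of A B n] Qdef by simp
  have xQ: "x ^ Q = x ^ m * x" using Qm by (simp add: mult.commute)
  have wQ: "w ^ Q = u ^ Q - x ^ Q - 1" unfolding wdef fd by simp
  have "[w ^ Q = u - x ^ Q - 1] (mod h)" unfolding wQ
    by (intro cong_diff uq cong_refl)
  also have "u - x ^ Q - 1 = x ^ m - 1" by (simp add: udef)
  finally have wQc: "[w ^ Q = x ^ m - 1] (mod h)" .
  have e1: "(x + 1) * (x ^ m - 1) = w" by (simp add: wdef udef xQ algebra_simps)
  have e2: "(x + 1) * x ^ Q = x * u" by (simp add: udef xQ algebra_simps)
  have S1: "[w ^ Q * x * u = w * x ^ Q] (mod h)"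
  proof (rule cong_cancel_prime[OF pe hx1])
    have "[(x + 1) * (w ^ Q * x * u) = (x + 1) * ((x ^ m - 1) * x * u)] (mod h)"
      by (intro cong_mult cong_refl wQc)
    also have "(x + 1) * ((x ^ m - 1) * x * u) = ((x + 1) * (x ^ m - 1)) * x * u"
      by (simp add: mult_ac)
    also have "\<dots> = w * ((x + 1) * x ^ Q)" by (simp add: e1 e2 mult_ac)
    also have "\<dots> = (x + 1) * (w * x ^ Q)" by (simp add: mult_ac)
    finally show "[(x + 1) * (w ^ Q * x * u) = (x + 1) * (w * x ^ Q)] (mod h)" .
  qed
  show ?thesis
  proof (induction k)
    case 0 then show ?case by simp
  next
    case (Suc k)
    define W where "W = w ^ (Q ^ Suc k)"
    define Y where "Y = x ^ (Q ^ Suc k)"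
    have pw: "(a ^ (Q ^ k)) ^ Q = a ^ (Q ^ Suc k)" for a :: "'a poly"
      by (simp add: power_mult[symmetric] mult.commute)
    have "[(w ^ (Q ^ k) * x * u ^ k) ^ Q = (w * x ^ (Q ^ k)) ^ Q] (mod h)"
      by (rule cong_pow[OF Suc.IH])
    hence T0: "[W * x ^ Q * (u ^ Q) ^ k = w ^ Q * Y] (mod h)"
      by (simp add: power_mult_distrib pw W_def Y_def power_mult[symmetric] mult.commute)
    have "[W * x ^ Q * (u ^ Q) ^ k = W * x ^ Q * u ^ k] (mod h)"
      by (intro cong_mult cong_refl cong_pow uq)
    hence T: "[W * x ^ Q * u ^ k = w ^ Q * Y] (mod h)"
      using T0 by (metis cong_sym cong_trans)
    have "[x ^ Q * (W * x * u ^ Suc k) = (W * x ^ Q * u ^ k) * (x * u)] (mod h)"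
      by (simp add: mult_ac)
    also have "[(W * x ^ Q * u ^ k) * (x * u) = (w ^ Q * Y) * (x * u)] (mod h)"
      by (intro cong_mult T cong_refl)
    also have "(w ^ Q * Y) * (x * u) = (w ^ Q * x * u) * Y" by (simp add: mult_ac)
    also have "[(w ^ Q * x * u) * Y = (w * x ^ Q) * Y] (mod h)"
      by (intro cong_mult S1 cong_refl)
    also have "(w * x ^ Q) * Y = x ^ Q * (w * Y)" by (simp add: mult_ac)
    finally have "[x ^ Q * (W * x * u ^ Suc k) = x ^ Q * (w * Y)] (mod h)" .
    moreover have "\<not> h dvd x ^ Q" using pe hx prime_elem_dvd_power by blast
    ultimately have "[W * x * u ^ Suc k = w * Y] (mod h)"
      using cong_cancel_prime[OF pe] by blast
    then show ?case by (simp add: W_def Y_def)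
  qed
qed


lemma deriv_identity:
  fixes f g :: "'a::field poly"
  assumes e: "pX ^ Suc k - 1 = f * g" and c: "of_nat (Suc k) = (-1::'a)"
  shows "f * (g + pX * pderiv g) + pX * pderiv f * g = -1"
proof -
  have "pderiv (pX ^ Suc k - 1 :: 'a poly) = smult (of_nat (Suc k)) (pX ^ k)"
    by (simp add: pderiv_power_Suc pderiv_diff pderiv_pCons del: power_Suc)
  also have "\<dots> = - (pX ^ k)" by (simp only: c smult_minus_left smult_1_left)
  finally have d1: "pderiv (pX ^ Suc k - 1 :: 'a poly) = - (pX ^ k)" .
  have "pderiv (f * g) = f * pderiv g + g * pderiv f" by (rule pderiv_mult)
  with d1 e have d2: "f * pderiv g + g * pderiv f = - (pX ^ k)" by simp
  have "f * (g + pX * pderiv g) + pX * pderiv f * g = f * g + pX * (f * pderiv g + g * pderiv f)"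
    by (simp add: algebra_simps)
  also have "\<dots> = (pX ^ Suc k - 1) + pX * (- (pX ^ k))" using e d2 by simp
  also have "\<dots> = -1" by (simp add: algebra_simps)
  finally show ?thesis .
qed

context
  fixes f :: "'a::{finite,field} poly" and n :: nat
    and qq QQ mm :: nat and uu PP GG :: "'a poly"
  assumes n1: "n \<ge> 1" and prim: "primitive_poly n f" and fne: "f \<noteq> [:-1, 1:]"
    and qq_def: "qq = card (UNIV :: 'a set)" and QQ_def: "QQ = qq ^ n" and mm_def: "mm = QQ - 1"
    and uu_def: "uu = monom 1 QQ + monom 1 mm" and PP_def: "PP = pcompose f uu"
    and GG_def: "GG = pcompose f [:1, 1:]"
begin

lemma pf: "lead_coeff f = 1" "degree f = n" "irreducible f" "f dvd pX ^ mm - 1"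
  "\<And>k. 0 < k \<Longrightarrow> k < mm \<Longrightarrow> \<not> f dvd pX ^ k - 1"
  using prim unfolding primitive_poly_def mm_def QQ_def qq_def by auto

lemma q2: "qq \<ge> 2"
proof -
  have "card {0::'a, 1} \<le> card (UNIV :: 'a set)" by (rule card_mono) auto
  then show ?thesis by (simp add: qq_def)
qed

lemma Q2: "QQ \<ge> 2"
proof -
  have "qq \<le> qq ^ n" using n1 q2 by (simp add: self_le_power)
  then show ?thesis using q2 by (simp add: QQ_def)
qed

lemma Qm: "QQ = Suc mm" using Q2 by (simp add: mm_def)

lemma m1: "mm \<ge> 1" using Q2 by (simp add: mm_def)

lemma ofnatQ: "of_nat QQ = (0::'a)"
proof -
  obtain r where r: "qq = CHAR('a) ^ r" using card_char_power unfolding qq_def by blast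
  have "r \<noteq> 0" using r q2 by (cases r) auto
  hence "CHAR('a) dvd qq" using r by (simp add: dvd_power)
  moreover have "qq dvd QQ" using n1 by (simp add: dvd_power QQ_def)
  ultimately have "CHAR('a) dvd QQ" by (rule dvd_trans)
  then show ?thesis by (simp add: of_nat_eq_0_iff_char_dvd)
qed

lemma ofnatm: "of_nat (Suc (mm - 1)) = (-1::'a)"
proof -
  have "of_nat QQ = (of_nat (Suc mm) :: 'a)" using Qm by simp
  hence "of_nat mm + (1::'a) = 0" using ofnatQ by (simp add: add.commute)
  hence "of_nat mm = (-1::'a)" by (simp add: eq_neg_iff_add_eq_0)
  moreover have "Suc (mm - 1) = mm" using m1 by simp
  ultimately show ?thesis by simp
qed

lemma u_alt: "uu = pX ^ QQ + pX ^ mm"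
  by (simp add: monom_altdef uu_def)

lemma u_fac: "uu = pX ^ mm * (pX + 1)"
proof -
  have "pX ^ QQ = pX ^ mm * (pX :: 'a poly)" using Qm by (simp add: mult.commute)
  then show ?thesis unfolding u_alt by (simp add: algebra_simps)
qed

lemma f_nz: "f \<noteq> 0" using pf(3) by (auto simp: irreducible_def)

lemma f0: "poly f 0 \<noteq> 0"
proof
  assume f0: "poly f 0 = 0"
  obtain k where k: "pX ^ mm - 1 = f * k" using pf(4) by (auto elim: dvdE)
  have "poly (pX ^ mm - 1 :: 'a poly) 0 = poly f 0 * poly k 0" by (simp only: k poly_mult)
  hence "(0::'a) ^ mm - 1 = 0" using f0 by simp
  then show False using m1 by (simp add: power_0_left)
qed

lemma f1: "poly f 1 \<noteq> 0"
proof
  assume "poly f 1 = 0"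
  hence "[:-1, 1:] dvd f" using dvd_iff_poly_eq_0[of "-1" f] by simp
  then obtain k where k: "f = [:-1, 1:] * k" by (auto elim: dvdE)
  have "\<not> is_unit ([:-1, 1:] :: 'a poly)" by (simp add: is_unit_poly_iff)
  hence uk: "is_unit k" using irreducibleD[OF pf(3) k] by blast
  then obtain c where c: "k = [:c:]" using is_unit_poly_iff by blast
  have "lead_coeff f = c" using k c by (simp add: lead_coeff_mult)
  hence "c = 1" using pf(1) by simp
  with k c fne show False by simp
qed

lemma fQ: "f dvd pX ^ QQ - pX"
proof -
  have "pX ^ QQ - pX = pX * (pX ^ mm - (1 :: 'a poly))" using Qm by (simp add: algebra_simps)
  then show ?thesis using pf(4) by (metis dvd_mult)
qed

lemma pcompose_X1: "pcompose (pX ^ QQ - pX) [:1, 1:] = (pX ^ QQ - pX :: 'a poly)"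
proof -
  have e: "[:1, 1:] = 1 + (pX :: 'a poly)" by (simp add: one_pCons)
  have "pcompose (pX ^ QQ - pX) [:1, 1:] = [:1, 1:] ^ QQ - ([:1, 1:] :: 'a poly)"
  proof -
    have a: "pcompose (pX ^ QQ) [:1,1:] = [:1, 1:] ^ QQ" by (rule pcompose_pX_power)
    have b: "pcompose pX [:1,1:] = ([:1, 1:] :: 'a poly)" using pcompose_pX_power[of 1 "[:1,1:]"] by simp
    show ?thesis by (simp only: pcompose_diff a b)
  qed
  also have "[:1, 1:] ^ QQ = 1 ^ QQ + (pX :: 'a poly) ^ QQ"
    unfolding e QQ_def qq_def by (rule poly_frob_add)
  finally show ?thesis by (simp add: e)
qed

lemma degG: "degree GG = n" using pf(2) by (simp add: GG_def degree_pcompose)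

lemma poly_G0: "poly GG 0 = poly f 1" by (simp add: GG_def poly_pcompose)

lemma G_dvd_P: "GG dvd PP"
proof -
  define x where "x = (pX :: 'a poly)"
  have "GG dvd pcompose (pX ^ QQ - pX) [:1, 1:]" unfolding GG_def by (rule pcompose_dvd[OF fQ])
  hence g1: "GG dvd x * (x ^ mm - 1)" using Qm unfolding pcompose_X1 x_def by (simp add: algebra_simps)
  have xirr: "irreducible x" unfolding x_def by (rule irreducible_linear_field_poly) simp
  have nxG: "\<not> x dvd GG"
  proof
    assume "x dvd GG"
    hence "poly GG 0 = 0" using dvd_iff_poly_eq_0[of 0 GG] unfolding x_def by simp
    with poly_G0 f1 show False by simp
  qed
  obtain a b where ab: "a * x + b * GG = 1" using irred_bezout[OF xirr nxG] by blast
  define c where "c = (x + 1) * (x ^ mm - 1)"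
  have "GG dvd (x + 1) * (x * (x ^ mm - 1))" using g1 by (rule dvd_mult)
  hence "GG dvd a * ((x + 1) * (x * (x ^ mm - 1)))" by (rule dvd_mult)
  moreover have "a * ((x + 1) * (x * (x ^ mm - 1))) = (a * x) * c" by (simp add: c_def mult_ac)
  ultimately have "GG dvd (a * x) * c" by simp
  moreover have "GG dvd (b * GG) * c" by simp
  ultimately have "GG dvd (a * x) * c + (b * GG) * c" by (rule dvd_add)
  also have "(a * x) * c + (b * GG) * c = c" by (simp add: ab flip: distrib_right)
  finally have Gc: "GG dvd c" .
  have "uu - [:1, 1:] = c" unfolding c_def u_fac x_def by (simp add: algebra_simps one_pCons)
  hence "c dvd PP - GG" unfolding PP_def GG_def by (metis dvd_pcompose_diff)
  hence "GG dvd PP - GG" using Gc by (rule dvd_trans[rotated])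
  then show ?thesis by (metis dvd_add dvd_refl diff_add_cancel)
qed

lemma degs: "degree PP = n * QQ" "degree (PP div GG) = n * mm" "PP = GG * (PP div GG)"
proof -
  have du: "degree uu = QQ"
  proof -
    have "degree (pX ^ mm :: 'a poly) < degree (pX ^ QQ :: 'a poly)" using Qm by (simp add: degree_linear_power)
    then show ?thesis unfolding u_alt by (simp add: degree_add_eq_left degree_linear_power)
  qed
  show dP: "degree PP = n * QQ" using pf(2) du by (simp add: PP_def degree_pcompose)
  show e: "PP = GG * (PP div GG)" using G_dvd_P by simp
  have P0: "PP \<noteq> 0" using dP n1 Q2 by (metis degree_0 mult_is_0 not_one_le_zero nat_less_le zero_less_numeral le_less_trans)
  have "GG \<noteq> 0" "PP div GG \<noteq> 0" using P0 e by auto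
  hence "degree PP = degree GG + degree (PP div GG)" by (subst e) (simp add: degree_mult_eq)
  then show "degree (PP div GG) = n * mm" using dP degG Qm by simp
qed

lemma h_basic:
  assumes irr: "irreducible h" and hP: "h dvd PP"
  shows "\<not> h dvd uu" "\<not> h dvd pX" "\<not> h dvd pX + 1"
proof -
  show nu: "\<not> h dvd uu"
  proof
    assume "h dvd uu"
    moreover have "(uu - 0) dvd PP - pcompose f 0" unfolding PP_def by (rule dvd_pcompose_diff)
    ultimately have "h dvd PP - pcompose f 0" using dvd_trans by auto
    hence "h dvd PP - (PP - pcompose f 0)" by (rule dvd_diff[OF hP])
    hence "h dvd pcompose f 0" by simp
    hence "h dvd [:poly f 0:]" by (simp add: pcompose_0' poly_0_coeff_0)
    moreover have "is_unit [:poly f 0:]" using f0 by (simp add: is_unit_poly_iff dvd_field_iff)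
    ultimately have "is_unit h" by (rule dvd_unit_imp_unit)
    with irr show False by (simp add: irreducible_def)
  qed
  show "\<not> h dvd pX"
  proof
    assume "h dvd pX"
    moreover have "pX dvd uu" unfolding u_fac using m1 by (simp add: dvd_power)
    ultimately show False using nu by (metis dvd_trans)
  qed
  show "\<not> h dvd pX + 1"
  proof
    assume "h dvd pX + 1"
    moreover have "pX + 1 dvd uu" unfolding u_fac by simp
    ultimately show False using nu by (metis dvd_trans)
  qed
qed

lemma no_double:
  assumes irr: "irreducible h" and hG: "h dvd GG" and hF: "h dvd PP div GG"
  shows False
proof -
  have pe: "prime_elem h" by (rule field_poly_irreducible_imp_prime[OF irr])
  obtain a where a: "GG = h * a" using hG by (auto elim: dvdE)
  obtain b where b: "PP div GG = h * b" using hF by (auto elim: dvdE)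
  have r: "PP = h * (h * (a * b))" using degs(3) a b by (simp add: mult_ac)
  have hP: "h dvd PP" using r by simp
  have "pderiv PP = h * pderiv (h * (a * b)) + (h * (a * b)) * pderiv h"
    by (subst r) (rule pderiv_mult)
  hence hd: "h dvd pderiv PP" by simp
  have du: "pderiv uu = - (pX ^ (mm - 1))"
  proof -
    have "pderiv uu = monom (of_nat QQ * 1) (QQ - 1) + monom (of_nat mm * 1) (mm - 1)"
      by (simp only: uu_def pderiv_add pderiv_monom)
    also have "\<dots> = monom (-1) (mm - 1)" using ofnatQ ofnatm m1 by simp
    also have "\<dots> = - (pX ^ (mm - 1))" by (simp add: monom_altdef)
    finally show ?thesis .
  qed
  have "pderiv PP = pcompose (pderiv f) uu * pderiv uu" by (simp add: PP_def pderiv_pcompose)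
  hence "h dvd pcompose (pderiv f) uu * pX ^ (mm - 1)" using hd du by simp
  moreover have "\<not> h dvd pX ^ (mm - 1)"
    using h_basic(2)[OF irr hP] pe prime_elem_dvd_power by blast
  ultimately have hf': "h dvd pcompose (pderiv f) uu" using pe prime_elem_dvd_mult_iff by blast
  obtain g where g: "pX ^ mm - 1 = f * g" using pf(4) by (auto elim: dvdE)
  have g': "pX ^ Suc (mm - 1) - 1 = f * g" using g m1 by simp
  have idt: "f * (g + pX * pderiv g) + pX * pderiv f * g = -1" by (rule deriv_identity[OF g' ofnatm])
  have "pcompose (f * (g + pX * pderiv g) + pX * pderiv f * g) uu = -1"
    by (simp only: idt pcompose_uminus pcompose_1)
  hence e: "PP * pcompose (g + pX * pderiv g) uu + uu * pcompose (pderiv f) uu * pcompose g uu = -1"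
    by (simp only: pcompose_add pcompose_mult PP_def pcompose_pX)
  have "h dvd PP * pcompose (g + pX * pderiv g) uu + uu * pcompose (pderiv f) uu * pcompose g uu"
    using hP hf' by (intro dvd_add dvd_mult2 dvd_mult) 
  hence "h dvd -1" by (simp only: e)
  hence "is_unit h" by simp
  with irr show False by (simp add: irreducible_def)
qed

lemma core:
  assumes irr: "irreducible h" and hP: "h dvd PP" and nG: "\<not> h dvd GG"
  shows "n * mm dvd degree h"
proof -
  define d where "d = degree h"
  define x where "x = (pX :: 'a poly)"
  define w where "w = uu - x - 1"
  have pe: "prime_elem h" by (rule field_poly_irreducible_imp_prime[OF irr])
  have d1: "d \<ge> 1" unfolding d_def by (rule irred_degree_pos[OF irr])
  have nu: "\<not> h dvd uu" and nx: "\<not> h dvd x" and nx1: "\<not> h dvd x + 1"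
    using h_basic[OF irr hP] unfolding x_def by auto
  have Fr: "[A ^ (qq ^ d) = A] (mod h)" for A using irr_frob_all[OF irr] unfolding qq_def d_def by simp
  have hfu: "h dvd pcompose f uu" using hP PP_def by simp
  have uq: "[uu ^ QQ = uu] (mod h)"
  proof -
    have "pcompose f uu dvd pcompose (pX ^ QQ - pX) uu" by (rule pcompose_dvd[OF fQ])
    also have "pcompose (pX ^ QQ - pX) uu = uu ^ QQ - uu"
      by (simp only: pcompose_diff pcompose_pX_power pcompose_pX)
    finally have "h dvd uu ^ QQ - uu" using hfu by (rule dvd_trans[rotated])
    then show ?thesis by (simp add: cong_iff_dvd_diff)
  qed
  have um: "[uu ^ mm = 1] (mod h)"
  proof -
    have "h dvd uu ^ QQ - uu" using uq by (simp add: cong_iff_dvd_diff)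
    also have "uu ^ QQ - uu = uu * (uu ^ mm - 1)" using Qm by (simp add: algebra_simps)
    finally have "h dvd uu ^ mm - 1" using pe nu prime_elem_dvd_mult_iff by blast
    then show ?thesis by (simp add: cong_iff_dvd_diff)
  qed
  have prim_u: "\<not> h dvd uu ^ k - 1" if "0 < k" "k < mm" for k
  proof
    assume "h dvd uu ^ k - 1"
    moreover have "pcompose (pX ^ k - 1) uu = uu ^ k - 1"
      by (simp only: pcompose_diff pcompose_pX_power pcompose_1)
    ultimately have "h dvd pcompose (pX ^ k - 1) uu" by simp
    hence "is_unit h" by (rule comp_coprime[OF pf(3) pf(5)[OF that] hfu])
    with irr show False by (simp add: irreducible_def)
  qed
  have iter: "[uu ^ (qq ^ (i * s)) = uu] (mod h)" if base: "[uu ^ (qq ^ i) = uu] (mod h)" for i s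
  proof (induction s)
    case 0 then show ?case by simp
  next
    case (Suc s)
    have "uu ^ (qq ^ (i * Suc s)) = (uu ^ (qq ^ (i * s))) ^ (qq ^ i)"
      by (simp add: power_mult[symmetric] power_add mult.commute)
    also have "[\<dots> = uu ^ (qq ^ i)] (mod h)" by (rule cong_pow[OF Suc.IH])
    also note base
    finally show ?case .
  qed
  have ndvd: "n dvd d"
  proof -
    define g where "g = gcd d n"
    obtain a b where ab: "d * a = n * b + g" using bezout_nat[of d n] d1 unfolding g_def by auto
    have g0: "g > 0" using n1 unfolding g_def by simp
    have A: "[uu ^ (qq ^ (d * a)) = uu] (mod h)" by (rule iter[OF Fr])
    have B: "[uu ^ (qq ^ (n * b)) = uu] (mod h)" by (rule iter) (use uq in \<open>simp add: QQ_def\<close>)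
    have "uu ^ (qq ^ (d * a)) = (uu ^ (qq ^ (n * b))) ^ (qq ^ g)"
      by (simp add: ab power_add power_mult[symmetric])
    also have "[\<dots> = uu ^ (qq ^ g)] (mod h)" by (rule cong_pow[OF B])
    finally have "[uu ^ (qq ^ g) = uu] (mod h)" using A by (metis cong_sym cong_trans)
    hence "h dvd uu ^ (qq ^ g) - uu" by (simp add: cong_iff_dvd_diff)
    moreover have "qq ^ g \<ge> 2" using q2 g0 by (metis one_le_numeral order_trans self_le_power less_imp_le_nat one_le_numeral not_gr_zero)
    moreover have "uu ^ (qq ^ g) - uu = uu * (uu ^ (qq ^ g - 1) - 1)" if "qq ^ g \<ge> 2"
    proof -
      have "qq ^ g = Suc (qq ^ g - 1)" using that by simp
      then show ?thesis by (metis (no_types) power_Suc right_diff_distrib mult_1_right)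
    qed
    ultimately have hg: "h dvd uu ^ (qq ^ g - 1) - 1" using pe nu prime_elem_dvd_mult_iff by metis
    have "\<not> g < n"
    proof
      assume "g < n"
      hence "qq ^ g < qq ^ n" using q2 by (intro power_strict_increasing) auto
      hence "qq ^ g - 1 < mm" using \<open>qq ^ g \<ge> 2\<close> unfolding mm_def QQ_def by simp
      moreover have "0 < qq ^ g - 1" using \<open>qq ^ g \<ge> 2\<close> by simp
      ultimately show False using prim_u hg by blast
    qed
    moreover have "g dvd n" unfolding g_def by simp
    hence "g \<le> n" using n1 by (simp add: dvd_imp_le)
    ultimately have "g = n" by simp
    then show ?thesis unfolding g_def by (metis gcd_dvd1)
  qed
  then obtain k where dk: "d = n * k" by (auto elim: dvdE)
  have k0: "k > 0" using d1 dk by (cases k) auto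
  have QQx: "QQ = card (UNIV :: 'a set) ^ n" by (simp add: QQ_def qq_def)
  have ux: "uu = x ^ QQ + x ^ mm" using u_alt by (simp add: x_def)
  have S: "[w ^ (QQ ^ k) * x * uu ^ k = w * x ^ (QQ ^ k)] (mod h)"
    by (rule S_lemma[OF pe nx nx1 QQx Qm uq ux w_def])
  have Qk: "QQ ^ k = qq ^ d" by (simp add: QQ_def dk power_mult)
  have "[w * x * uu ^ k = w ^ (QQ ^ k) * x * uu ^ k] (mod h)"
    unfolding Qk by (intro cong_mult cong_refl cong_sym[OF Fr])
  also note S
  also have "[w * x ^ (QQ ^ k) = w * x] (mod h)" unfolding Qk by (intro cong_mult cong_refl Fr)
  finally have "[(w * x) * uu ^ k = (w * x) * 1] (mod h)" by (simp add: mult_ac)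
  moreover have "\<not> h dvd w * x"
  proof -
    have "\<not> h dvd w"
    proof
      assume "h dvd w"
      moreover have "w = uu - [:1, 1:]" by (simp add: w_def x_def one_pCons)
      moreover have "(uu - [:1, 1:]) dvd PP - GG" unfolding PP_def GG_def by (rule dvd_pcompose_diff)
      ultimately have "h dvd PP - GG" by (metis dvd_trans)
      hence "h dvd PP - (PP - GG)" by (rule dvd_diff[OF hP])
      with nG show False by simp
    qed
    then show ?thesis using nx pe prime_elem_dvd_mult_iff by blast
  qed
  ultimately have uk: "[uu ^ k = 1] (mod h)" by (rule cong_cancel_prime[OF pe, rotated])
  have "mm dvd k"
  proof (rule ccontr)
    assume nd: "\<not> mm dvd k"
    have "uu ^ k = (uu ^ mm) ^ (k div mm) * uu ^ (k mod mm)"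
      by (simp add: power_mult[symmetric] power_add[symmetric])
    also have "[\<dots> = 1 ^ (k div mm) * uu ^ (k mod mm)] (mod h)"
      by (intro cong_mult cong_pow um cong_refl)
    finally have "[uu ^ (k mod mm) = 1] (mod h)" using uk by (metis cong_sym cong_trans mult_1 power_one)
    hence "h dvd uu ^ (k mod mm) - 1" by (simp add: cong_iff_dvd_diff)
    moreover have "0 < k mod mm" using nd by (simp add: mod_eq_0_iff_dvd[symmetric] gr0I)
    moreover have "k mod mm < mm" using m1 by simp
    ultimately show False using prim_u by blast
  qed
  then show ?thesis unfolding d_def[symmetric] dk by simp
qed

end

theorem mainTheorem12:
  fixes f :: "'a::{finite,field} poly" and n :: nat
  defines "q \<equiv> card (UNIV :: 'a set)"
  assumes "n \<ge> 1"
    and "primitive_poly n f"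
    and "f \<noteq> [:-1, 1:]"
  shows "pcompose f [:1, 1:] dvd pcompose f (monom 1 (q ^ n) + monom 1 (q ^ n - 1))
    \<and> degree (pcompose f (monom 1 (q ^ n) + monom 1 (q ^ n - 1)) div pcompose f [:1, 1:])
        = n * (q ^ n - 1)
    \<and> irreducible (pcompose f (monom 1 (q ^ n) + monom 1 (q ^ n - 1)) div pcompose f [:1, 1:])"
proof -
  let ?u = "monom 1 (q ^ n) + monom 1 (q ^ n - 1) :: 'a poly"
  let ?P = "pcompose f ?u"
  let ?G = "pcompose f [:1, 1:]"
  let ?F = "?P div ?G"
  note ctx = assms(2,3,4) q_def[THEN meta_eq_to_obj_eq] refl refl refl refl refl
  have GP: "?G dvd ?P" by (rule G_dvd_P[OF ctx])
  have dF: "degree ?F = n * (q ^ n - 1)" by (rule degs(2)[OF ctx])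
  have PGF: "?P = ?G * ?F" by (rule degs(3)[OF ctx])
  have m1': "q ^ n - 1 \<ge> 1" by (rule m1[OF ctx])
  have dpos: "n * (q ^ n - 1) \<ge> 1" using assms(2) m1' by simp
  have F0: "?F \<noteq> 0" using dF dpos by (metis degree_0 not_one_le_zero)
  have dF0: "degree ?F \<noteq> 0" using dF dpos by linarith
  have Fnu: "\<not> is_unit ?F" using is_unit_iff_degree[OF F0] dF0 by blast
  have "irreducible ?F"
  proof (rule irreducibleI[OF F0 Fnu])
    fix a b assume ab: "?F = a * b"
    show "is_unit a \<or> is_unit b"
    proof (rule ccontr)
      assume "\<not> (is_unit a \<or> is_unit b)"
      hence na: "\<not> is_unit a" and nb: "\<not> is_unit b" by auto
      have a0: "a \<noteq> 0" and b0: "b \<noteq> 0" using ab F0 by auto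
      have da: "degree a \<ge> 1" using na is_unit_iff_degree[OF a0] by simp
      have db: "degree b \<ge> 1" using nb is_unit_iff_degree[OF b0] by simp
      have "degree ?F = degree a + degree b" using ab a0 b0 by (simp add: degree_mult_eq)
      hence dlt: "degree a < n * (q ^ n - 1)" using dF db by simp
      obtain h where h: "irreducible h" "h dvd a" using irr_factor_exists[OF da] by blast
      have hF: "h dvd ?F" using h(2) ab by simp
      have hP: "h dvd ?P" using hF PGF by (metis dvd_mult2 mult.commute)
      have nG: "\<not> h dvd ?G" using no_double[OF ctx h(1) _ hF] by blast
      have "n * (q ^ n - 1) dvd degree h" by (rule core[OF ctx h(1) hP nG])
      moreover have "degree h > 0" using irred_degree_pos[OF h(1)] by simp
      ultimately have "degree h \<ge> n * (q ^ n - 1)" by (simp add: dvd_imp_le)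
      moreover have "degree h \<le> degree a" using h(2) a0 by (rule dvd_imp_degree_le)
      ultimately show False using dlt by simp
    qed
  qed
  then show ?thesis using GP dF by simp
qed

end
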